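(* In the operad $\mathcal{W}$ of black boxes and wiring diagrams, composition is associative: for composable wiring diagrams $\tau\colon W\to X$, $\phi\colon X\to Y$, $\psi\colon Y\to Z$ (where each domain may be an indexed family of black boxes, composed via disjoint unions of families), one has $(\psi\circ\phi)\circ\tau=\psi\circ(\phi\circ\tau)$ as wiring diagrams (up to isomorphism of the data); equivalently, the associativity axiom for a symmetric colored operad holds for $\mathcal{W}$.
   Context: A black box $X=(\mathrm{in}(X),\mathrm{out}(X),{\tt vset})$: finite sets of input and output wires with ${\tt vset}$ assigning a pointed set to each wire. For an indexed family $Y=(Y(i))_{i\in n}$ put $\mathrm{in}(Y)=\coprod_i\mathrm{in}(Y(i))$, $\mathrm{out}(Y)=\coprod_i\mathrm{out}(Y(i))$. A wiring diagram $\psi\colon Y\to Z$ consists of a finite set $\mathrm{Del}(\psi)$ of delay nodes with pointed sets ${\tt vset}(d)$, and a supplier assignment $s_\psi\colon \mathrm{Dem}(\psi)=\mathrm{out}(Z)\amalg\mathrm{in}(Y)\amalg\mathrm{Del}(\psi)\to\mathrm{Sup}(\psi)=\mathrm{in}(Z)\amalg\mathrm{out}(Y)\amalg\mathrm{Del}(\psi)$ preserving ${\tt vset}$ and with $s_\psi(\mathrm{out}(Z))\subseteq\mathrm{out}(Y)\amalg\mathrm{Del}(\psi)$; tuples differing by a bijection of delay-node sets compatible with all data are identified. Composition: given $\psi\colon Y\to Z$ and $\phi_i\colon X_i\to Y(i)$, let $\phi=\bigotimes\phi_i\colon X\to Y$ be their disjoint union ($\mathrm{Del}(\phi)=\coprod\mathrm{Del}(\phi_i)$,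 $s_\phi=\coprod s_{\phi_i}$). The composite $\omega=\psi\circ\phi$ has $\mathrm{Del}(\omega)=\mathrm{Del}(\phi)\amalg\mathrm{Del}(\psi)$, $\mathrm{Sup}(\omega)=\mathrm{in}(Z)\amalg\mathrm{out}(X)\amalg\mathrm{Del}(\omega)$, and $s_\omega=h\circ s_\phi|_{\mathrm{in}(X)\amalg\mathrm{Del}(\phi)}\amalg f\circ s_\psi|_{\mathrm{out}(Z)\amalg\mathrm{Del}(\psi)}$, where $f=\mathrm{id}_{\mathrm{in}(Z)}\amalg s_\phi|_{\mathrm{out}(Y)}\amalg\mathrm{id}_{\mathrm{Del}(\psi)}\colon\mathrm{Sup}(\psi)\to\mathrm{Sup}(\omega)$ and $h=(f\circ s_\psi)|_{\mathrm{in}(Y)}\amalg\mathrm{id}_{\mathrm{out}(X)}\amalg\mathrm{id}_{\mathrm{Del}(\phi)}\colon\mathrm{Sup}(\phi)\to\mathrm{Sup}(\omega)$. *)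

theory Defs
  imports Main
begin

type_synonym 'v pset = "'v set \<times> 'v"

definition pointed :: "'v pset \<Rightarrow> bool" where
  "pointed S \<longleftrightarrow> snd S \<in> fst S"

record ('w, 'v) box =
  b_in   :: "'w set"
  b_out  :: "'w set"
  v_in   :: "'w \<Rightarrow> 'v pset"
  v_out  :: "'w \<Rightarrow> 'v pset"

definition wf_box :: "('w, 'v) box \<Rightarrow> bool" where
  "wf_box B \<longleftrightarrow> finite (b_in B) \<and> finite (b_out B)
     \<and> (\<forall>w\<in>b_in B. pointed (v_in B w)) \<and> (\<forall>w\<in>b_out B. pointed (v_out B w))"

text \<open>Elements of the coproducts Dem = out(Z) + in(Y) + Del and Sup = in(Z) + out(Y) + Del
  of a wiring diagram Y -> Z, Y an indexed family (a list) of black boxes: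
  Outer w is a wire of the codomain Z, Inner i w the wire w of Y(i), Delay d a delay node.\<close>
datatype 'w port = Outer 'w | Inner nat 'w | Delay "nat list"

text \<open>A wiring diagram: delay nodes (named by elements of nat list, any finite set can be
  so named; diagrams are only considered up to renaming them), their pointed sets,
  and the supplier assignment.\<close>
record ('w, 'v) wd =
  wdel  :: "nat list set"
  wvdel :: "nat list \<Rightarrow> 'v pset"
  wsup  :: "'w port \<Rightarrow> 'w port"

definition Dem :: "('w, 'v) box list \<Rightarrow> ('w, 'v) box \<Rightarrow> ('w, 'v) wd \<Rightarrow> 'w port set" where
  "Dem Y Z \<psi> = Outer ` b_out Z \<union> {Inner i w | i w. i < length Y \<and> w \<in> b_in (Y ! i)}
               \<union> Delay ` wdel \<psi>"

definition Sup :: "('w, 'v) box list \<Rightarrow> ('w, 'v) box \<Rightarrow> ('w, 'v) wd \<Rightarrow> 'w port set" where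
  "Sup Y Z \<psi> = Outer ` b_in Z \<union> {Inner i w | i w. i < length Y \<and> w \<in> b_out (Y ! i)}
               \<union> Delay ` wdel \<psi>"

fun vdem :: "('w, 'v) box list \<Rightarrow> ('w, 'v) box \<Rightarrow> ('w, 'v) wd \<Rightarrow> 'w port \<Rightarrow> 'v pset" where
  "vdem Y Z \<psi> (Outer w) = v_out Z w"
| "vdem Y Z \<psi> (Inner i w) = v_in (Y ! i) w"
| "vdem Y Z \<psi> (Delay d) = wvdel \<psi> d"

fun vsup :: "('w, 'v) box list \<Rightarrow> ('w, 'v) box \<Rightarrow> ('w, 'v) wd \<Rightarrow> 'w port \<Rightarrow> 'v pset" where
  "vsup Y Z \<psi> (Outer w) = v_in Z w"
| "vsup Y Z \<psi> (Inner i w) = v_out (Y ! i) w"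
| "vsup Y Z \<psi> (Delay d) = wvdel \<psi> d"

definition is_wd :: "('w, 'v) box list \<Rightarrow> ('w, 'v) box \<Rightarrow> ('w, 'v) wd \<Rightarrow> bool" where
  "is_wd Y Z \<psi> \<longleftrightarrow> wf_box Z \<and> (\<forall>B\<in>set Y. wf_box B)
     \<and> finite (wdel \<psi>) \<and> (\<forall>d\<in>wdel \<psi>. pointed (wvdel \<psi> d))
     \<and> (\<forall>p\<in>Dem Y Z \<psi>. wsup \<psi> p \<in> Sup Y Z \<psi> \<and> vsup Y Z \<psi> (wsup \<psi> p) = vdem Y Z \<psi> p)
     \<and> (\<forall>w\<in>b_out Z. wsup \<psi> (Outer w) \<notin> Outer ` b_in Z)"

fun ren :: "(nat list \<Rightarrow> nat list) \<Rightarrow> 'w port \<Rightarrow> 'w port" where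
  "ren b (Delay d) = Delay (b d)"
| "ren b p = p"

definition wd_iso :: "('w, 'v) box list \<Rightarrow> ('w, 'v) box \<Rightarrow> ('w, 'v) wd \<Rightarrow> ('w, 'v) wd \<Rightarrow> bool" where
  "wd_iso Y Z \<omega>1 \<omega>2 \<longleftrightarrow> (\<exists>b. bij_betw b (wdel \<omega>1) (wdel \<omega>2)
     \<and> (\<forall>d\<in>wdel \<omega>1. wvdel \<omega>2 (b d) = wvdel \<omega>1 d)
     \<and> (\<forall>p\<in>Dem Y Z \<omega>1. wsup \<omega>2 (ren b p) = ren b (wsup \<omega>1 p)))"

text \<open>Concatenation of families: wire j of block i of Xs is wire (flat Xs i j) of concat Xs.\<close>
definition flat :: "'a list list \<Rightarrow> nat \<Rightarrow> nat \<Rightarrow> nat" where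
  "flat Xs i j = sum_list (map length (take i Xs)) + j"

fun unflat :: "nat list \<Rightarrow> nat \<Rightarrow> nat \<times> nat" where
  "unflat [] k = (0, k)"
| "unflat (m # ms) k = (if k < m then (0, k) else (case unflat ms (k - m) of (i, j) \<Rightarrow> (Suc i, j)))"

text \<open>Composition psi o (phi_0,...,phi_{n-1}) with phi_i : Xs!i -> Y!i and psi : Y -> Z.
  Delay nodes: 0#i#d for d in Del(phi_i), 1#d for d in Del(psi).\<close>

text \<open>Inclusion of out(X) + Del(phi) (block i) into Sup(omega).\<close>
fun comp_lift :: "'a list list \<Rightarrow> nat \<Rightarrow> 'w port \<Rightarrow> 'w port" where
  "comp_lift Xs i (Inner j w) = Inner (flat Xs i j) w"
| "comp_lift Xs i (Delay d) = Delay (0 # i # d)"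
| "comp_lift Xs i (Outer w) = Outer w"

fun comp_f :: "('w, 'v) wd \<Rightarrow> 'a list list \<Rightarrow> ('w, 'v) wd list \<Rightarrow> 'w port \<Rightarrow> 'w port" where
  "comp_f \<psi> Xs \<phi>s (Outer w) = Outer w"
| "comp_f \<psi> Xs \<phi>s (Inner i w) = comp_lift Xs i (wsup (\<phi>s ! i) (Outer w))"
| "comp_f \<psi> Xs \<phi>s (Delay d) = Delay (1 # d)"

fun comp_h :: "('w, 'v) wd \<Rightarrow> 'a list list \<Rightarrow> ('w, 'v) wd list \<Rightarrow> nat \<Rightarrow> 'w port \<Rightarrow> 'w port" where
  "comp_h \<psi> Xs \<phi>s i (Outer w) = comp_f \<psi> Xs \<phi>s (wsup \<psi> (Inner i w))"
| "comp_h \<psi> Xs \<phi>s i (Inner j w) = comp_lift Xs i (Inner j w)"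
| "comp_h \<psi> Xs \<phi>s i (Delay d) = comp_lift Xs i (Delay d)"

fun comp_sup_delay :: "('w, 'v) wd \<Rightarrow> 'a list list \<Rightarrow> ('w, 'v) wd list \<Rightarrow> nat list \<Rightarrow> 'w port" where
  "comp_sup_delay \<psi> Xs \<phi>s (0 # i # d) = comp_h \<psi> Xs \<phi>s i (wsup (\<phi>s ! i) (Delay d))"
| "comp_sup_delay \<psi> Xs \<phi>s (Suc 0 # d) = comp_f \<psi> Xs \<phi>s (wsup \<psi> (Delay d))"
| "comp_sup_delay \<psi> Xs \<phi>s e = Delay e"

fun comp_sup :: "('w, 'v) wd \<Rightarrow> 'a list list \<Rightarrow> ('w, 'v) wd list \<Rightarrow> 'w port \<Rightarrow> 'w port" where
  "comp_sup \<psi> Xs \<phi>s (Outer w) = comp_f \<psi> Xs \<phi>s (wsup \<psi> (Outer w))"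
| "comp_sup \<psi> Xs \<phi>s (Inner k w) =
     (case unflat (map length Xs) k of (i, j) \<Rightarrow> comp_h \<psi> Xs \<phi>s i (wsup (\<phi>s ! i) (Inner j w)))"
| "comp_sup \<psi> Xs \<phi>s (Delay e) = comp_sup_delay \<psi> Xs \<phi>s e"

fun comp_vdel :: "('w, 'v) wd \<Rightarrow> ('w, 'v) wd list \<Rightarrow> nat list \<Rightarrow> 'v pset" where
  "comp_vdel \<psi> \<phi>s (0 # i # d) = wvdel (\<phi>s ! i) d"
| "comp_vdel \<psi> \<phi>s (Suc 0 # d) = wvdel \<psi> d"
| "comp_vdel \<psi> \<phi>s e = undefined"

definition wd_comp :: "('w, 'v) wd \<Rightarrow> ('w, 'v) box list list \<Rightarrow> ('w, 'v) wd list \<Rightarrow> ('w, 'v) wd" where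
  "wd_comp \<psi> Xs \<phi>s =
     \<lparr> wdel = {0 # i # d | i d. i < length \<phi>s \<and> d \<in> wdel (\<phi>s ! i)} \<union> {1 # d | d. d \<in> wdel \<psi>},
       wvdel = comp_vdel \<psi> \<phi>s,
       wsup = comp_sup \<psi> Xs \<phi>s \<rparr>"

end

theory Submission
  imports Defs
begin

lemma wsup_comp[simp]: "wsup (wd_comp a b c) = comp_sup a b c" by (simp add: wd_comp_def)
lemma wvdel_comp[simp]: "wvdel (wd_comp a b c) = comp_vdel a c" by (simp add: wd_comp_def)
lemma wdel_comp[simp]: "wdel (wd_comp a b c) = {0 # i # d | i d. i < length c \<and> d \<in> wdel (c ! i)} \<union> {1 # d | d. d \<in> wdel a}"
  by (simp add: wd_comp_def)

lemma flat_cong: "map length L = map length L' \<Longrightarrow> flat L i j = flat L' i j"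
  by (simp add: flat_def take_map[symmetric])

lemma flat_Cons0[simp]: "flat (x # L) 0 j = j" by (simp add: flat_def)
lemma flat_ConsS[simp]: "flat (x # L) (Suc i) j = length x + flat L i j" by (simp add: flat_def)

lemma unflat_flat: "i < length L \<Longrightarrow> j < length (L!i) \<Longrightarrow> unflat (map length L) (flat L i j) = (i,j)"
proof (induction L arbitrary: i)
  case Nil then show ?case by simp
next
  case (Cons x L) then show ?case by (cases i) auto
qed

lemma flat_unflat: "k < length (concat L) \<Longrightarrow> \<exists>i j. i < length L \<and> j < length (L!i) \<and> k = flat L i j"
proof (induction L arbitrary: k)
  case Nil then show ?case by simp
next
  case (Cons x L)
  show ?case
  proof (cases "k < length x")
    case True then show ?thesis by (intro exI[of _ 0] exI[of _ k]) simp
  next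
    case False
    with Cons.prems have "k - length x < length (concat L)" by simp
    from Cons.IH[OF this] obtain i j where "i < length L" "j < length (L!i)" "k - length x = flat L i j" by blast
    with False show ?thesis by (intro exI[of _ "Suc i"] exI[of _ j]) auto
  qed
qed

lemma concat_nth_flat: "i < length L \<Longrightarrow> j < length (L!i) \<Longrightarrow> concat L ! flat L i j = L!i!j"
proof (induction L arbitrary: i)
  case Nil then show ?case by simp
next
  case (Cons x L) then show ?case by (cases i) (auto simp: nth_append)
qed

lemma flat_less: "i < length L \<Longrightarrow> j < length (L!i) \<Longrightarrow> flat L i j < length (concat L)"
proof (induction L arbitrary: i)
  case Nil then show ?case by simp
next
  case (Cons x L) then show ?case by (cases i) auto
qed

lemma flat_append1: "j \<le> length x \<Longrightarrow> flat (x @ L) j l = flat x j l"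
  by (simp add: flat_def)

lemma flat_append2: "flat (x @ L) (length x + j) l = sum_list (map length x) + flat L j l"
  by (simp add: flat_def)

lemma flat_flat: "i < length Wss \<Longrightarrow> j < length (Wss!i) \<Longrightarrow>
   flat (concat Wss) (flat Wss i j) l = flat (map concat Wss) i (flat (Wss!i) j l)"
proof (induction Wss arbitrary: i)
  case Nil then show ?case by simp
next
  case (Cons x Wss)
  show ?case
  proof (cases i)
    case 0 with Cons.prems show ?thesis by (simp add: flat_append1)
  next
    case (Suc i')
    with Cons.prems have "i' < length Wss" "j < length (Wss!i')" by auto
    with Cons.IH Suc show ?thesis by (simp add: flat_append2 length_concat)
  qed
qed

fun bmap :: "nat list \<Rightarrow> nat list \<Rightarrow> nat list" where
  "bmap ms (0 # m # d) = (case unflat ms m of (i,j) \<Rightarrow> 0#i#0#j#d)"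
| "bmap ms (Suc 0 # 0 # i # d) = 0 # i # Suc 0 # d"
| "bmap ms (Suc 0 # Suc 0 # d) = Suc 0 # d"
| "bmap ms e = e"

fun cmap :: "'a list list \<Rightarrow> nat list \<Rightarrow> nat list" where
  "cmap L (0 # i # 0 # j # d) = 0 # flat L i j # d"
| "cmap L (0 # i # Suc 0 # d) = Suc 0 # 0 # i # d"
| "cmap L (Suc 0 # d) = Suc 0 # Suc 0 # d"
| "cmap L e = e"

lemma Sup_cases:
  assumes "s \<in> Sup Y Z \<psi>"
  obtains (O) w where "s = Outer w" "w \<in> b_in Z"
   | (I) i w where "s = Inner i w" "i < length Y" "w \<in> b_out (Y!i)"
   | (D) d where "s = Delay d" "d \<in> wdel \<psi>"
  using assms unfolding Sup_def by blast

lemma Sup_cases_no: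
  assumes "s \<in> Sup Y Z \<psi>" "s \<notin> Outer ` b_in Z"
  obtains (I) i w where "s = Inner i w" "i < length Y" "w \<in> b_out (Y!i)"
   | (D) d where "s = Delay d" "d \<in> wdel \<psi>"
  using assms unfolding Sup_def by blast

lemma wd_sup: "is_wd Y Z \<psi> \<Longrightarrow> p \<in> Dem Y Z \<psi> \<Longrightarrow> wsup \<psi> p \<in> Sup Y Z \<psi>"
  unfolding is_wd_def by blast
lemma wd_out: "is_wd Y Z \<psi> \<Longrightarrow> w \<in> b_out Z \<Longrightarrow> wsup \<psi> (Outer w) \<notin> Outer ` b_in Z"
  unfolding is_wd_def by blast
lemma Dem_Outer: "w \<in> b_out Z \<Longrightarrow> Outer w \<in> Dem Y Z \<psi>" by (simp add: Dem_def)
lemma Dem_Inner: "i < length Y \<Longrightarrow> w \<in> b_in (Y!i) \<Longrightarrow> Inner i w \<in> Dem Y Z \<psi>" by (simp add: Dem_def)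
lemma Dem_Delay: "d \<in> wdel \<psi> \<Longrightarrow> Delay d \<in> Dem Y Z \<psi>" by (simp add: Dem_def)

locale AS =
  fixes Z :: "('w, 'v) box" and Y :: "('w, 'v) box list"
    and Xs :: "('w, 'v) box list list" and Wss :: "('w, 'v) box list list list"
    and \<psi> :: "('w, 'v) wd" and \<phi>s :: "('w, 'v) wd list" and \<tau>ss :: "('w, 'v) wd list list"
  assumes psi: "is_wd Y Z \<psi>"
    and lX: "length Xs = length Y" and lphi: "length \<phi>s = length Y"
    and phi: "\<forall>i<length Y. is_wd (Xs ! i) (Y ! i) (\<phi>s ! i)"
    and lW: "length Wss = length Y" and ltau: "length \<tau>ss = length Y"
    and tau: "\<forall>i<length Y. length (Wss ! i) = length (Xs ! i) \<and> length (\<tau>ss ! i) = length (Xs ! i)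
           \<and> (\<forall>j<length (Xs ! i). is_wd (Wss ! i ! j) (Xs ! i ! j) (\<tau>ss ! i ! j))"
begin

abbreviation "om1 \<equiv> wd_comp \<psi> Xs \<phi>s"
abbreviation "rhos \<equiv> map (\<lambda>i. wd_comp (\<phi>s ! i) (Wss ! i) (\<tau>ss ! i)) [0..<length Y]"
abbreviation "bb \<equiv> bmap (map length Xs)"

lemma mlW: "map length Wss = map length Xs"
  using tau lW lX by (intro nth_equalityI) auto
lemma mltau: "map length \<tau>ss = map length Xs"
  using tau ltau lX by (intro nth_equalityI) auto

lemma tau_nth: "i < length Y \<Longrightarrow> j < length (Xs!i) \<Longrightarrow> concat \<tau>ss ! flat Xs i j = \<tau>ss!i!j"
  using concat_nth_flat[of i \<tau>ss j] flat_cong[OF mltau] tau ltau by auto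

lemma flatW: "flat Wss i j = flat Xs i j" using flat_cong[OF mlW] .

lemma flatflat: "i < length Y \<Longrightarrow> j < length (Xs!i) \<Longrightarrow>
   flat (concat Wss) (flat Xs i j) l = flat (map concat Wss) i (flat (Wss!i) j l)"
  using flat_flat[of i Wss j l] flatW tau lW by auto

lemma bb_flat: "i < length Y \<Longrightarrow> j < length (Xs!i) \<Longrightarrow> bb (0 # flat Xs i j # d) = 0#i#0#j#d"
  using unflat_flat[of i Xs j] lX by simp

lemma B0:
  assumes i: "i < length Y" and y: "y \<in> Sup (Xs!i) (Y!i) (\<phi>s!i)" and no: "y \<notin> Outer ` b_in (Y!i)"
  shows "ren bb (comp_f om1 (concat Wss) (concat \<tau>ss) (comp_lift Xs i y))
         = comp_lift (map concat Wss) i (comp_f (\<phi>s!i) (Wss!i) (\<tau>ss!i) y)"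
  using y no
proof (cases rule: Sup_cases_no)
  case (I j z)
  define u where "u = wsup (\<tau>ss!i!j) (Outer z)"
  have wdt: "is_wd (Wss ! i ! j) (Xs ! i ! j) (\<tau>ss ! i ! j)" using tau i I by auto
  have u: "u \<in> Sup (Wss!i!j) (Xs!i!j) (\<tau>ss!i!j)" "u \<notin> Outer ` b_in (Xs!i!j)"
    using wd_sup[OF wdt Dem_Outer] wd_out[OF wdt] I unfolding u_def by auto
  then show ?thesis
  proof (cases rule: Sup_cases_no)
    case (I l x)
    then show ?thesis using \<open>y = Inner j z\<close> tau_nth[OF i \<open>j < _\<close>] flatflat[OF i \<open>j < _\<close>]
      by (simp add: u_def[symmetric])
  next
    case (D d)
    then show ?thesis using \<open>y = Inner j z\<close> tau_nth[OF i \<open>j < _\<close>] bb_flat[OF i \<open>j < _\<close>]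
      by (simp add: u_def[symmetric])
  qed
next
  case (D d)
  then show ?thesis by simp
qed

lemma phi_wd: "i < length Y \<Longrightarrow> is_wd (Xs ! i) (Y ! i) (\<phi>s ! i)" using phi by auto

lemma rho_nth[simp]: "i < length Y \<Longrightarrow> rhos ! i = wd_comp (\<phi>s ! i) (Wss ! i) (\<tau>ss ! i)" by simp

lemma A:
  assumes s: "s \<in> Sup Y Z \<psi>"
  shows "ren bb (comp_f om1 (concat Wss) (concat \<tau>ss) (comp_f \<psi> Xs \<phi>s s))
         = comp_f \<psi> (map concat Wss) rhos s"
  using s
proof (cases rule: Sup_cases)
  case (I i w)
  define t where "t = wsup (\<phi>s!i) (Outer w)"
  have t: "t \<in> Sup (Xs!i) (Y!i) (\<phi>s!i)" "t \<notin> Outer ` b_in (Y!i)"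
    using wd_sup[OF phi_wd Dem_Outer] wd_out[OF phi_wd] I unfolding t_def by auto
  show ?thesis using B0[OF \<open>i < _\<close> t] I by (simp add: t_def[symmetric])
qed simp_all

lemma B:
  assumes i: "i < length Y" and y: "y \<in> Sup (Xs!i) (Y!i) (\<phi>s!i)"
  shows "ren bb (comp_f om1 (concat Wss) (concat \<tau>ss) (comp_h \<psi> Xs \<phi>s i y))
         = comp_h \<psi> (map concat Wss) rhos i (comp_f (\<phi>s!i) (Wss!i) (\<tau>ss!i) y)"
proof (cases "y \<in> Outer ` b_in (Y!i)")
  case True
  then obtain z where z: "y = Outer z" "z \<in> b_in (Y!i)" by blast
  have "wsup \<psi> (Inner i z) \<in> Sup Y Z \<psi>" using wd_sup[OF psi Dem_Inner] i z by auto
  from A[OF this] z show ?thesis by simp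
next
  case False
  have e: "comp_h \<psi> Xs \<phi>s i y = comp_lift Xs i y" using y False by (cases rule: Sup_cases) auto
  have "comp_h \<psi> (map concat Wss) rhos i (comp_f (\<phi>s!i) (Wss!i) (\<tau>ss!i) y)
     = comp_lift (map concat Wss) i (comp_f (\<phi>s!i) (Wss!i) (\<tau>ss!i) y)"
    using y False
  proof (cases rule: Sup_cases_no)
    case (I j z)
    have wdt: "is_wd (Wss ! i ! j) (Xs ! i ! j) (\<tau>ss ! i ! j)" using tau i I by auto
    have u: "wsup (\<tau>ss!i!j) (Outer z) \<in> Sup (Wss!i!j) (Xs!i!j) (\<tau>ss!i!j)" "wsup (\<tau>ss!i!j) (Outer z) \<notin> Outer ` b_in (Xs!i!j)"
      using wd_sup[OF wdt Dem_Outer] wd_out[OF wdt] I by auto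
    then show ?thesis using I by (cases rule: Sup_cases_no) auto
  qed simp
  then show ?thesis using B0[OF i y False] e by simp
qed

lemma C:
  assumes i: "i < length Y" and j: "j < length (Xs!i)" and v: "v \<in> Sup (Wss!i!j) (Xs!i!j) (\<tau>ss!i!j)"
  shows "ren bb (comp_h om1 (concat Wss) (concat \<tau>ss) (flat Xs i j) v)
         = comp_h \<psi> (map concat Wss) rhos i (comp_h (\<phi>s!i) (Wss!i) (\<tau>ss!i) j v)"
  using v
proof (cases rule: Sup_cases)
  case (O x)
  have "wsup (\<phi>s!i) (Inner j x) \<in> Sup (Xs!i) (Y!i) (\<phi>s!i)"
    using wd_sup[OF phi_wd Dem_Inner] i j O by auto
  from B[OF i this] O show ?thesis using unflat_flat[of i Xs j] lX i j by simp
next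
  case (I l x)
  then show ?thesis using flatflat[OF i j] by simp
next
  case (D d)
  then show ?thesis using bb_flat[OF i j] by simp
qed

abbreviation "LL \<equiv> wd_comp om1 (concat Wss) (concat \<tau>ss)"
abbreviation "RR \<equiv> wd_comp \<psi> (map concat Wss) rhos"

lemma D1_cases:
  assumes "e \<in> wdel LL"
  obtains (T) i j d where "e = 0 # flat Xs i j # d" "i < length Y" "j < length (Xs!i)" "d \<in> wdel (\<tau>ss!i!j)"
   | (P) i d where "e = 1 # 0 # i # d" "i < length Y" "d \<in> wdel (\<phi>s!i)"
   | (S) d where "e = 1 # 1 # d" "d \<in> wdel \<psi>"
proof -
  from assms consider (a) m d where "e = 0 # m # d" "m < length (concat \<tau>ss)" "d \<in> wdel (concat \<tau>ss ! m)"
    | (b) i d where "e = 1 # 0 # i # d" "i < length Y" "d \<in> wdel (\<phi>s!i)"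
    | (c) d where "e = 1 # 1 # d" "d \<in> wdel \<psi>" using lphi by auto
  then show ?thesis
  proof cases
    case a
    from flat_unflat[OF a(2)] obtain i j where "i < length \<tau>ss" "j < length (\<tau>ss!i)" "m = flat \<tau>ss i j" by blast
    moreover have "flat \<tau>ss i j = flat Xs i j" using flat_cong[OF mltau] .
    ultimately show ?thesis using a T tau_nth mltau ltau tau by (metis (no_types, lifting))
  qed (use that in auto)
qed

lemma D2_iff: "e \<in> wdel RR \<longleftrightarrow>
   (\<exists>i j d. e = 0#i#0#j#d \<and> i < length Y \<and> j < length (Xs!i) \<and> d \<in> wdel (\<tau>ss!i!j))
 \<or> (\<exists>i d. e = 0#i#1#d \<and> i < length Y \<and> d \<in> wdel (\<phi>s!i))
 \<or> (\<exists>d. e = 1#d \<and> d \<in> wdel \<psi>)"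
  using tau by auto

lemma D1_intro:
  "i < length Y \<Longrightarrow> j < length (Xs!i) \<Longrightarrow> d \<in> wdel (\<tau>ss!i!j) \<Longrightarrow> 0 # flat Xs i j # d \<in> wdel LL"
  "i < length Y \<Longrightarrow> d \<in> wdel (\<phi>s!i) \<Longrightarrow> 1 # 0 # i # d \<in> wdel LL"
  "d \<in> wdel \<psi> \<Longrightarrow> 1 # 1 # d \<in> wdel LL"
proof -
  assume a: "i < length Y" "j < length (Xs!i)" "d \<in> wdel (\<tau>ss!i!j)"
  have "flat Xs i j < length (concat \<tau>ss)"
    using flat_less[of i \<tau>ss j] flat_cong[OF mltau, of i j] a ltau tau by auto
  then show "0 # flat Xs i j # d \<in> wdel LL" using a tau_nth by auto
qed (use lphi in auto)

lemma main: "wd_iso (concat (concat Wss)) Z LL RR"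
  unfolding wd_iso_def
proof (intro exI[of _ bb] conjI ballI)
  show "bij_betw bb (wdel LL) (wdel RR)"
  proof (rule bij_betw_byWitness[where f'="cmap Xs"])
    show "\<forall>a\<in>wdel LL. cmap Xs (bb a) = a"
    proof
      fix a assume "a \<in> wdel LL" then show "cmap Xs (bb a) = a"
        by (cases rule: D1_cases) (auto simp: bb_flat unflat_flat lX)
    qed
    show "\<forall>a\<in>wdel RR. bb (cmap Xs a) = a"
      by (auto simp: D2_iff bb_flat unflat_flat lX simp del: wdel_comp)
    show "bb ` wdel LL \<subseteq> wdel RR"
    proof
      fix a assume "a \<in> bb ` wdel LL"
      then obtain e where "e \<in> wdel LL" "a = bb e" by blast
      then show "a \<in> wdel RR"
        by (cases rule: D1_cases) (auto simp: bb_flat unflat_flat lX D2_iff simp del: wdel_comp)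
    qed
    show "cmap Xs ` wdel RR \<subseteq> wdel LL"
    proof
      fix a assume "a \<in> cmap Xs ` wdel RR"
      then obtain e where e: "e \<in> wdel RR" "a = cmap Xs e" by blast
      from e(1)[unfolded D2_iff] show "a \<in> wdel LL"
      proof (elim disjE exE conjE)
        fix i j d assume "e = 0#i#0#j#d" "i < length Y" "j < length (Xs!i)" "d \<in> wdel (\<tau>ss!i!j)"
        then show ?thesis using e(2) D1_intro(1) by simp
      next
        fix i d assume "e = 0#i#1#d" "i < length Y" "d \<in> wdel (\<phi>s!i)"
        then show ?thesis using e(2) D1_intro(2) by simp
      next
        fix d assume "e = 1#d" "d \<in> wdel \<psi>"
        then show ?thesis using e(2) D1_intro(3) by simp
      qed
    qed
  qed
next
  fix e assume "e \<in> wdel LL"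
  then show "wvdel RR (bb e) = wvdel LL e"
    by (cases rule: D1_cases) (auto simp: bb_flat unflat_flat lX tau_nth)
next
  fix p assume p: "p \<in> Dem (concat (concat Wss)) Z LL"
  show "wsup RR (ren bb p) = ren bb (wsup LL p)"
  proof -
    from p consider (O) w where "p = Outer w" "w \<in> b_out Z"
      | (I) k w where "p = Inner k w" "k < length (concat (concat Wss))" "w \<in> b_in (concat (concat Wss) ! k)"
      | (D) e where "p = Delay e" "e \<in> wdel LL" unfolding Dem_def by blast
    then show ?thesis
    proof cases
      case O
      have "wsup \<psi> (Outer w) \<in> Sup Y Z \<psi>" using wd_sup[OF psi Dem_Outer] O by auto
      from A[OF this] O show ?thesis by simp
    next
      case I
      from flat_unflat[OF I(2)] obtain m l where ml: "m < length (concat Wss)" "l < length (concat Wss ! m)"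
        "k = flat (concat Wss) m l" by blast
      from flat_unflat[OF ml(1)] obtain i j where ij: "i < length Wss" "j < length (Wss!i)" "m = flat Wss i j" by blast
      have i: "i < length Y" and j: "j < length (Xs!i)" using ij lW tau by auto
      have m: "m = flat Xs i j" using ij flatW by simp
      have cm: "concat Wss ! m = Wss!i!j" using concat_nth_flat[OF ij(1,2)] ij by simp
      have l: "l < length (Wss!i!j)" using ml cm by simp
      have w: "w \<in> b_in (Wss!i!j!l)" using I concat_nth_flat[OF ml(1,2)] ml cm by simp
      have k2: "k = flat (map concat Wss) i (flat (Wss!i) j l)" using ml m flatflat[OF i j] by simp
      have lt: "flat (Wss!i) j l < length (map concat Wss ! i)" using flat_less[OF ij(2)] l ij by simp
      have u1: "unflat (map length (map concat Wss)) k = (i, flat (Wss!i) j l)"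
        using unflat_flat[of i "map concat Wss" "flat (Wss!i) j l"] k2 lt ij by simp
      have u2: "unflat (map length (Wss!i)) (flat (Wss!i) j l) = (j, l)"
        using unflat_flat[OF ij(2)] l by simp
      have u3: "unflat (map length (concat Wss)) k = (m, l)"
        using unflat_flat[OF ml(1,2)] ml by simp
      have wdt: "is_wd (Wss ! i ! j) (Xs ! i ! j) (\<tau>ss ! i ! j)" using tau i j by auto
      have v: "wsup (\<tau>ss!i!j) (Inner l w) \<in> Sup (Wss!i!j) (Xs!i!j) (\<tau>ss!i!j)"
        using wd_sup[OF wdt Dem_Inner] l w by auto
      from C[OF i j v] show ?thesis using I u1 u2 u3 m tau_nth[OF i j] i by simp
    next
      case D
      from D(2) show ?thesis
      proof (cases rule: D1_cases)
        case (T i j d)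
        have wdt: "is_wd (Wss ! i ! j) (Xs ! i ! j) (\<tau>ss ! i ! j)" using tau T by auto
        have v: "wsup (\<tau>ss!i!j) (Delay d) \<in> Sup (Wss!i!j) (Xs!i!j) (\<tau>ss!i!j)"
          using wd_sup[OF wdt Dem_Delay] T by auto
        from C[OF T(2,3) v] show ?thesis using D T bb_flat tau_nth by simp
      next
        case (P i d)
        have v: "wsup (\<phi>s!i) (Delay d) \<in> Sup (Xs!i) (Y!i) (\<phi>s!i)"
          using wd_sup[OF phi_wd Dem_Delay] P by auto
        from B[OF P(2) v] show ?thesis using D P by simp
      next
        case (S d)
        have v: "wsup \<psi> (Delay d) \<in> Sup Y Z \<psi>" using wd_sup[OF psi Dem_Delay] S by auto
        from A[OF v] show ?thesis using D S by simp
      qed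
    qed
  qed
qed

end
theorem proposition2p15:
  fixes Z :: "('w, 'v) box" and Y :: "('w, 'v) box list"
    and Xs :: "('w, 'v) box list list" and Wss :: "('w, 'v) box list list list"
    and \<psi> :: "('w, 'v) wd" and \<phi>s :: "('w, 'v) wd list" and \<tau>ss :: "('w, 'v) wd list list"
  assumes "is_wd Y Z \<psi>"
    and "length Xs = length Y" and "length \<phi>s = length Y"
    and "\<forall>i<length Y. is_wd (Xs ! i) (Y ! i) (\<phi>s ! i)"
    and "length Wss = length Y" and "length \<tau>ss = length Y"
    and "\<forall>i<length Y. length (Wss ! i) = length (Xs ! i) \<and> length (\<tau>ss ! i) = length (Xs ! i)
           \<and> (\<forall>j<length (Xs ! i). is_wd (Wss ! i ! j) (Xs ! i ! j) (\<tau>ss ! i ! j))"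
  shows "wd_iso (concat (concat Wss)) Z
           (wd_comp (wd_comp \<psi> Xs \<phi>s) (concat Wss) (concat \<tau>ss))
           (wd_comp \<psi> (map concat Wss)
              (map (\<lambda>i. wd_comp (\<phi>s ! i) (Wss ! i) (\<tau>ss ! i)) [0..<length Y]))"
  using AS.main[OF AS.intro[OF assms]] .

end
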